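(* Let $T$, $\varphi_\ell$, $1<r<R$ and $\mathcal{L}$ be as in the setting below, and let $\rho\in(r,R)$. Then $\mathcal{L}$ defines a bounded operator on $H^2(D_\rho)$ and, for all $N\in\mathbb{N}_0$, \[ \|\mathcal{L}-\mathcal{P}_N\mathcal{L}\|_{H^2(D_\rho)\to H^2(D_\rho)}\le C\left(\frac{\rho}{R}\right)^N,\qquad \|\mathcal{L}-\mathcal{L}\mathcal{P}_N\|_{H^2(D_\rho)\to H^2(D_\rho)}\le C\left(\frac{r}{\rho}\right)^N, \] where $C=\frac{\rho}{\sqrt{\rho^2-r^2}}\sup_{z\in D_R}\sum_{\ell=1}^d|\varphi_\ell'(z)|$ and $\mathcal{P}_N\colon H^2(D_\rho)\to H^2(D_\rho)$ is the Taylor projection. In particular \[ \|\mathcal{L}-\mathcal{P}_N\mathcal{L}\mathcal{P}_N\|_{H^2(D_\rho)\to H^2(D_\rho)}\le C\left(\left(\frac{\rho}{R}\right)^N+\left(\frac{r}{\rho}\right)^N\right) \] for $N\in\mathbb{N}_0$, and for the choice $\rho=\sqrt{Rr}$, \[ \|\mathcal{L}-\mathcal{P}_N\mathcal{L}\mathcal{P}_N\|_{H^2(D_\rho)\to H^2(D_\rho)}\le 2C\left(\frac{r}{R}\right)^{N/2}. \]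
   Context: Let $I=[-1,1]$. $T\colon I\to I$ is an analytic full branch map: there are closed intervals $I_1,\dots,I_d$ with disjoint interiors and $I=\bigcup_\ell I_\ell$ such that $T|_{\mathrm{int}(I_\ell)}$ is an analytic diffeomorphism with $\overline{T(I_\ell)}=I$ for each $\ell$. Let $\varphi_\ell\colon I\to I_\ell$ denote the inverse branches. It is assumed that there are $1<r<R$ such that each $\varphi_\ell$ extends to a bounded holomorphic function on $D_R=\{|z|<R\}$ and $\bigcup_{\ell}\varphi_\ell(D_R)\subseteq D_r$, where $D_s=\{z\in\mathbb{C}:|z|<s\}$. With $\sigma_\ell=\mathrm{sgn}(\varphi_\ell'(0))$, the transfer operator is $(\mathcal{L}f)(z)=\sum_{\ell=1}^d\sigma_\ell\varphi_\ell'(z)f(\varphi_\ell(z))$. $H^2(D_\rho)$ is the Hardy space of holomorphic $f(z)=\sum_n f_nz^n$ on $D_\rho$ with $\|f\|^2=\sum_n|f_n|^2\rho^{2n}<\infty$ (equivalently $\sup_{t<\rho}\frac1{2\pi}\int_0^{2\pi}|f(te^{i\theta})|^2d\theta$). The Taylor projection is $(\mathcal{P}_Nf)(z)=\sum_{n=0}^{N-1}f_nz^n$. *)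

theory Defs
  imports "HOL-Complex_Analysis.Complex_Analysis"
begin

definition taylor_coeff :: "(complex \<Rightarrow> complex) \<Rightarrow> nat \<Rightarrow> complex" where
  "taylor_coeff f n = (deriv ^^ n) f 0 / of_nat (fact n)"

definition H2 :: "real \<Rightarrow> (complex \<Rightarrow> complex) set" where
  "H2 \<rho> = {f. f holomorphic_on ball 0 \<rho> \<and>
              summable (\<lambda>n. (cmod (taylor_coeff f n))\<^sup>2 * \<rho> ^ (2 * n))}"

definition h2norm :: "real \<Rightarrow> (complex \<Rightarrow> complex) \<Rightarrow> real" where
  "h2norm \<rho> f = sqrt (\<Sum>n. (cmod (taylor_coeff f n))\<^sup>2 * \<rho> ^ (2 * n))"

definition h2_opnorm :: "real \<Rightarrow> ((complex \<Rightarrow> complex) \<Rightarrow> (complex \<Rightarrow> complex)) \<Rightarrow> real" where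
  "h2_opnorm \<rho> A = Sup {h2norm \<rho> (A f) | f. f \<in> H2 \<rho> \<and> h2norm \<rho> f \<le> 1}"

definition h2_bounded_op :: "real \<Rightarrow> ((complex \<Rightarrow> complex) \<Rightarrow> (complex \<Rightarrow> complex)) \<Rightarrow> bool" where
  "h2_bounded_op \<rho> A \<longleftrightarrow> (\<forall>f\<in>H2 \<rho>. A f \<in> H2 \<rho>) \<and>
      (\<exists>K. \<forall>f\<in>H2 \<rho>. h2norm \<rho> (A f) \<le> K * h2norm \<rho> f)"

definition taylor_proj :: "nat \<Rightarrow> (complex \<Rightarrow> complex) \<Rightarrow> (complex \<Rightarrow> complex)" where
  "taylor_proj N f = (\<lambda>z. \<Sum>n<N. taylor_coeff f n * z ^ n)"

definition transfer_op :: "nat \<Rightarrow> (nat \<Rightarrow> complex \<Rightarrow> complex) \<Rightarrow> (complex \<Rightarrow> complex) \<Rightarrow> (complex \<Rightarrow> complex)" where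
  "transfer_op d \<phi> f = (\<lambda>z. \<Sum>l=1..d. sgn (deriv (\<phi> l) 0) * deriv (\<phi> l) z * f (\<phi> l z))"

definition real_analytic_on :: "(real \<Rightarrow> real) \<Rightarrow> real set \<Rightarrow> bool" where
  "real_analytic_on T S \<longleftrightarrow> (\<forall>x\<in>S. \<exists>e>0. \<exists>c::nat \<Rightarrow> real.
       \<forall>y. \<bar>y - x\<bar> < e \<longrightarrow> (\<lambda>n. c n * (y - x) ^ n) sums T y)"

end

theory Submission
  imports Defs
begin


lemma tc_series:
  assumes "f holomorphic_on ball 0 s" "w \<in> ball 0 s"
  shows "(\<lambda>n. taylor_coeff f n * w^n) sums f w"
  using holomorphic_power_series[OF assms] by (simp add: taylor_coeff_def)

lemma tc_diff:
  assumes "f holomorphic_on ball 0 s" "g holomorphic_on ball 0 s" "s > 0"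
  shows "taylor_coeff (\<lambda>z. f z - g z) n = taylor_coeff f n - taylor_coeff g n"
  unfolding taylor_coeff_def
  by (subst higher_deriv_diff[OF assms(1,2)]) (use assms(3) in \<open>auto simp: diff_divide_distrib\<close>)

lemma tc_proj:
  "taylor_coeff (taylor_proj N h) n = (if n < N then taylor_coeff h n else 0)"
proof -
  have "taylor_proj N h has_fps_expansion (\<Sum>k<N. fps_const (taylor_coeff h k) * fps_X ^ k)"
    unfolding taylor_proj_def by (intro fps_expansion_intros)
  from fps_nth_fps_expansion[OF this, of n]
  have "taylor_coeff (taylor_proj N h) n = fps_nth (\<Sum>k<N. fps_const (taylor_coeff h k) * fps_X ^ k) n"
    by (simp add: taylor_coeff_def)
  also have "\<dots> = (\<Sum>k<N. taylor_coeff h k * (if n = k then 1 else 0))"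
    by (simp add: fps_sum_nth)
  also have "\<dots> = (\<Sum>k<N. if n = k then taylor_coeff h k else 0)"
    by (rule sum.cong) auto
  also have "\<dots> = (if n < N then taylor_coeff h n else 0)"
    by (simp add: sum.delta' if_distrib cong: if_cong)
  finally show ?thesis .
qed

lemma CS_inf:
  fixes x y :: "nat \<Rightarrow> real"
  assumes "\<And>n. x n \<ge> 0" "\<And>n. y n \<ge> 0" "summable (\<lambda>n. (x n)^2)" "summable (\<lambda>n. (y n)^2)"
  shows "summable (\<lambda>n. x n * y n) \<and> (\<Sum>n. x n * y n) \<le> sqrt (\<Sum>n. (x n)^2) * sqrt (\<Sum>n. (y n)^2)"
proof -
  have b: "(\<Sum>n\<in>A. x n * y n) \<le> sqrt (\<Sum>n. (x n)^2) * sqrt (\<Sum>n. (y n)^2)" if "finite A" for A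
  proof -
    have "(\<Sum>n\<in>A. x n * y n) = (\<Sum>n\<in>A. \<bar>x n\<bar> * \<bar>y n\<bar>)" using assms by simp
    also have "\<dots> \<le> L2_set x A * L2_set y A" by (rule L2_set_mult_ineq)
    also have "\<dots> \<le> sqrt (\<Sum>n. (x n)^2) * sqrt (\<Sum>n. (y n)^2)"
    proof (rule mult_mono)
      show "L2_set x A \<le> sqrt (\<Sum>n. (x n)\<^sup>2)" unfolding L2_set_def
        by (intro real_sqrt_le_mono sum_le_suminf assms that) auto
      show "L2_set y A \<le> sqrt (\<Sum>n. (y n)\<^sup>2)" unfolding L2_set_def
        by (intro real_sqrt_le_mono sum_le_suminf assms that) auto
    qed (auto simp: L2_set_def intro!: suminf_nonneg sum_nonneg assms)
    finally show ?thesis .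
  qed
  have s: "summable (\<lambda>n. x n * y n)"
    by (rule bounded_imp_summable[where B="sqrt (\<Sum>n. (x n)^2) * sqrt (\<Sum>n. (y n)^2)"])
       (use assms b in auto)
  show ?thesis using s suminf_le_const[OF s] b by blast
qed



lemma geo_tail:
  fixes q :: real
  assumes "0 \<le> q" "q < 1"
  shows "(\<lambda>n. if n < N then 0 else q^n) sums (q^N / (1 - q))"
proof -
  have g: "(\<lambda>n. q^n) sums (1 / (1 - q))" using geometric_sums[of q] assms by simp
  have "(\<lambda>n. if n \<in> {..<N} then 0 else q^n) sums (1 / (1 - q) + (\<Sum>n\<in>{..<N}. 0 - q^n))"
    by (rule sums_If_finite_set'[OF g]) auto
  also have "1 / (1 - q) + (\<Sum>n\<in>{..<N}. 0 - q^n) = q^N / (1 - q)"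
    using assms by (simp add: sum_negf sum_gp_strict field_simps)
  finally show ?thesis by simp
qed

lemma tail_bound:
  assumes f: "f \<in> H2 \<rho>" and r: "0 < r" "r < \<rho>" and w: "cmod w < r"
  shows "cmod (f w - taylor_proj N f w) \<le> h2norm \<rho> f * (r/\<rho>)^N * (\<rho> / sqrt (\<rho>\<^sup>2 - r\<^sup>2))"
proof -
  define c where "c = taylor_coeff f"
  have holo: "f holomorphic_on ball 0 \<rho>" and sm: "summable (\<lambda>n. (cmod (c n))\<^sup>2 * \<rho> ^ (2 * n))"
    using f by (auto simp: H2_def c_def)
  have wb: "w \<in> ball 0 \<rho>" using w r by auto
  have ser: "(\<lambda>n. c n * w^n) sums f w" using tc_series[OF holo wb] by (simp add: c_def)
  define a where "a n = (if n \<in> {..<N} then 0 else c n * w^n)" for n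
  have asum: "a sums (f w + (\<Sum>n\<in>{..<N}. 0 - c n * w^n))"
    unfolding a_def by (rule sums_If_finite_set'[OF ser]) auto
  have "f w + (\<Sum>n\<in>{..<N}. 0 - c n * w^n) = f w - taylor_proj N f w"
    by (simp add: taylor_proj_def c_def sum_negf)
  with asum have asum': "a sums (f w - taylor_proj N f w)" by simp
  define x where "x n = cmod (c n) * \<rho>^n" for n
  define q where "q = (r/\<rho>)^2"
  define y where "y n = (if n < N then 0 else (r/\<rho>)^n)" for n
  have x0: "x n \<ge> 0" for n using r by (simp add: x_def)
  have y0: "y n \<ge> 0" for n using r by (simp add: y_def)
  have xx: "(\<lambda>n. (x n)^2) = (\<lambda>n. (cmod (c n))\<^sup>2 * \<rho> ^ (2 * n))"
    by (auto simp: x_def power_mult_distrib power_mult[symmetric] mult.commute)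
  have yy: "(\<lambda>n. (y n)^2) = (\<lambda>n. if n < N then 0 else q^n)"
    by (auto simp: y_def q_def power_mult[symmetric] mult.commute power_mult_distrib)
  have "r^2 < \<rho>^2" using r by (intro power_strict_mono) auto
  then have q01: "0 \<le> q" "q < 1" using r by (auto simp: q_def power_divide)
  have ysum: "(\<lambda>n. (y n)^2) sums (q^N / (1 - q))" unfolding yy by (rule geo_tail[OF q01])
  have smx: "summable (\<lambda>n. (x n)^2)" using sm xx by simp
  have smy: "summable (\<lambda>n. (y n)^2)" using ysum by (simp add: sums_iff)
  from CS_inf[of x y, OF x0 y0 smx smy]
  have cs: "summable (\<lambda>n. x n * y n)" "(\<Sum>n. x n * y n) \<le> sqrt (\<Sum>n. (x n)^2) * sqrt (\<Sum>n. (y n)^2)"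
    by auto
  have ab: "norm (a n) \<le> x n * y n" for n
  proof (cases "n < N")
    case False
    have "norm (a n) = cmod (c n) * (cmod w)^n" using False by (simp add: a_def norm_mult norm_power)
    also have "\<dots> \<le> cmod (c n) * r^n" using w
      by (intro mult_left_mono power_mono) auto
    also have "\<dots> = x n * y n" using False r by (simp add: x_def y_def power_divide)
    finally show ?thesis .
  qed (simp add: a_def x_def y_def)
  have sn: "summable (\<lambda>n. norm (a n))"
    by (rule summable_comparison_test[OF _ cs(1)]) (use ab in auto)
  have "cmod (f w - taylor_proj N f w) = norm (suminf a)" using asum' by (simp add: sums_iff)
  also have "\<dots> \<le> (\<Sum>n. norm (a n))" by (rule summable_norm[OF sn])
  also have "\<dots> \<le> (\<Sum>n. x n * y n)" by (rule suminf_le[OF ab sn cs(1)])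
  also have "\<dots> \<le> sqrt (\<Sum>n. (x n)^2) * sqrt (\<Sum>n. (y n)^2)" by (rule cs(2))
  also have "sqrt (\<Sum>n. (x n)^2) = h2norm \<rho> f" by (simp add: xx h2norm_def c_def)
  also have "(\<Sum>n. (y n)^2) = q^N / (1 - q)" using ysum by (simp add: sums_iff)
  also have "sqrt (q^N / (1 - q)) = (r/\<rho>)^N * (\<rho> / sqrt (\<rho>\<^sup>2 - r\<^sup>2))"
  proof -
    have "1 - q = (\<rho>\<^sup>2 - r\<^sup>2) / \<rho>\<^sup>2" using r by (simp add: q_def power_divide field_simps)
    moreover have "q^N = ((r/\<rho>)^N)^2" by (simp add: q_def power_mult[symmetric] mult.commute)
    ultimately have "sqrt (q^N / (1 - q)) = (r/\<rho>)^N / (sqrt (\<rho>\<^sup>2 - r\<^sup>2) / \<rho>)"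
      using r by (simp add: real_sqrt_divide real_sqrt_mult)
    thus ?thesis by simp
  qed
  finally show ?thesis by (simp add: mult.assoc)
qed



lemma roots_orth:
  assumes K: "K > 0" and nm: "n < K" "m < K"
  shows "(\<Sum>k<K. (cis (2*pi/K)^n * cnj (cis (2*pi/K)^m))^k) = (if n = m then of_nat K else 0)"
proof -
  define x where "x = cis (2*pi/K)^n * cnj (cis (2*pi/K)^m)"
  define \<theta> where "\<theta> = 2*pi*(real n - real m)/K"
  have x: "x = cis \<theta>"
  proof -
    have "x = cis (real n * (2*pi/K) + - (real m * (2*pi/K)))"
      by (simp only: x_def Complex.DeMoivre cis_cnj cis_mult)
    also have "real n * (2*pi/K) + - (real m * (2*pi/K)) = \<theta>"
      unfolding \<theta>_def by (simp add: diff_divide_distrib[symmetric] algebra_simps)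
    finally show ?thesis .
  qed
  show ?thesis
  proof (cases "n = m")
    case True
    then have "x = 1" by (simp add: x \<theta>_def)
    then show ?thesis using True by (simp add: x_def)
  next
    case False
    have xK: "x^K = 1"
    proof -
      have "real K * \<theta> = 2*pi*(real_of_int (int n - int m))"
        using K by (simp add: \<theta>_def)
      then have "x^K = cis (2*pi*(real_of_int (int n - int m)))"
        by (simp add: x Complex.DeMoivre)
      also have "\<dots> = 1" by (rule cis_multiple_2pi) auto
      finally show ?thesis .
    qed
    have "x \<noteq> 1"
    proof
      assume "x = 1"
      then have "exp (\<i> * complex_of_real \<theta>) = 1" by (simp add: x cis_conv_exp)
      then obtain j :: int where j: "\<theta> = of_int (2*j) * pi" by (auto simp: exp_eq_1)
      then have "pi * (2*(real n - real m)) = pi * (2*(of_int j * K))" using K by (simp add: \<theta>_def field_simps)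
      then have "2*(real n - real m) = 2*(of_int j * K)" by (simp only: mult_cancel_left) simp
      then have e: "real n - real m = of_int j * real K" by simp
      have "j \<noteq> 0" using e False by auto
      then have "\<bar>of_int j\<bar> \<ge> (1::real)" by linarith
      then have "\<bar>of_int j * real K\<bar> \<ge> real K" using K by (simp add: abs_mult)
      with e nm show False by linarith
    qed
    then have "(\<Sum>k<K. x^k) = 0" by (simp add: sum_gp_strict xK)
    then show ?thesis using False unfolding x_def by simp
  qed
qed

lemma pw1: "(of_real t * (w::complex)^k)^n = of_real t^n * (w^n)^k"
  by (simp add: power_mult_distrib flip: power_mult) (simp add: mult.commute)

lemma term_eq:
  fixes w :: complex
  shows "a * (of_real t * w^k)^n * (b * (of_real t * cnj w ^ k)^m)
       = a * b * of_real (t^(n+m)) * (w^n * cnj (w^m))^k"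
proof -
  have e1: "(of_real t * w^k)^n = of_real t^n * (w^n)^k" by (rule pw1)
  have e2: "(of_real t * cnj w ^ k)^m = of_real t^m * (cnj w^m)^k" by (rule pw1)
  have e3: "(w^n * cnj (w^m))^k = (w^n)^k * (cnj w^m)^k" by (simp only: power_mult_distrib complex_cnj_power)
  have e4: "complex_of_real (t^(n+m)) = of_real t^n * of_real t^m" by (simp add: power_add)
  show ?thesis unfolding e1 e2 e3 e4 by (simp only: mult_ac)
qed

lemma disc_parseval:
  fixes a :: "nat \<Rightarrow> complex" and t :: real
  assumes K: "K > 0"
  shows "(\<Sum>k<K. (cmod (\<Sum>n<K. a n * (of_real t * cis (2*pi/K)^k)^n))\<^sup>2)
         = real K * (\<Sum>n<K. (cmod (a n))\<^sup>2 * t^(2*n))"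
proof -
  define \<omega> where "\<omega> = cis (2*pi/K)"
  define p where "p k = (\<Sum>n<K. a n * (of_real t * \<omega>^k)^n)" for k
  have orth: "(\<Sum>k<K. (\<omega>^n * cnj (\<omega>^m))^k) = (if n = m then of_nat K else 0)"
    if "n < K" "m < K" for n m
    unfolding \<omega>_def by (rule roots_orth[OF K that])
  have cp: "cnj (p k) = (\<Sum>m<K. cnj (a m) * (of_real t * cnj \<omega> ^ k)^m)" for k
    unfolding p_def by (simp add: cnj_sum)
  have "complex_of_real (\<Sum>k<K. (cmod (p k))\<^sup>2) = (\<Sum>k<K. p k * cnj (p k))"
    by (simp only: of_real_sum complex_norm_square)
  also have "\<dots> = (\<Sum>k<K. \<Sum>n<K. \<Sum>m<K. a n * cnj (a m) * of_real (t^(n+m)) * (\<omega>^n * cnj (\<omega>^m))^k)"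
  proof (rule sum.cong[OF refl])
    fix k
    have "p k * cnj (p k) = (\<Sum>n<K. \<Sum>m<K. a n * (of_real t * \<omega>^k)^n * (cnj (a m) * (of_real t * cnj \<omega> ^ k)^m))"
      unfolding cp by (simp add: p_def sum_product)
    also have "\<dots> = (\<Sum>n<K. \<Sum>m<K. a n * cnj (a m) * of_real (t^(n+m)) * (\<omega>^n * cnj (\<omega>^m))^k)"
      by (simp only: term_eq)
    finally show "p k * cnj (p k) = \<dots>" .
  qed
  also have "\<dots> = (\<Sum>n<K. \<Sum>m<K. \<Sum>k<K. a n * cnj (a m) * of_real (t^(n+m)) * (\<omega>^n * cnj (\<omega>^m))^k)"
    by (rule trans[OF sum.swap], rule sum.cong[OF refl], rule sum.swap)
  also have "\<dots> = (\<Sum>n<K. \<Sum>m<K. a n * cnj (a m) * of_real (t^(n+m)) * (\<Sum>k<K. (\<omega>^n * cnj (\<omega>^m))^k))"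
    by (simp only: sum_distrib_left)
  also have "\<dots> = (\<Sum>n<K. \<Sum>m<K. if n = m then a n * cnj (a n) * of_real (t^(2*n)) * of_nat K else 0)"
    by (intro sum.cong refl) (auto simp del: complex_cnj_power simp add: orth mult_2)
  also have "\<dots> = (\<Sum>n<K. a n * cnj (a n) * of_real (t^(2*n)) * of_nat K)"
    by (simp add: sum.delta)
  also have "\<dots> = (\<Sum>n<K. complex_of_real (real K * ((cmod (a n))\<^sup>2 * t^(2*n))))"
  proof (rule sum.cong[OF refl])
    fix n
    show "a n * cnj (a n) * of_real (t^(2*n)) * of_nat K = complex_of_real (real K * ((cmod (a n))\<^sup>2 * t^(2*n)))"
      by (simp only: of_real_mult complex_norm_square of_real_of_nat_eq mult_ac)
  qed
  also have "\<dots> = complex_of_real (real K * (\<Sum>n<K. (cmod (a n))\<^sup>2 * t^(2*n)))"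
    by (simp only: of_real_sum sum_distrib_left)
  finally show ?thesis unfolding p_def \<omega>_def of_real_eq_iff .
qed



lemma tail_norm:
  fixes c :: "nat \<Rightarrow> complex"
  assumes ser: "(\<lambda>n. c n * z^n) sums G" and sm: "summable (\<lambda>n. cmod (c n) * R^n)"
    and z: "cmod z \<le> R"
  shows "cmod (G - (\<Sum>n<K. c n * z^n)) \<le> (\<Sum>n. cmod (c n) * R^n) - (\<Sum>n<K. cmod (c n) * R^n)"
proof -
  define a where "a n = (if n \<in> {..<K} then 0 else c n * z^n)" for n
  have "a sums (G + (\<Sum>n\<in>{..<K}. 0 - c n * z^n))"
    unfolding a_def by (rule sums_If_finite_set'[OF ser]) auto
  then have as: "a sums (G - (\<Sum>n<K. c n * z^n))" by (simp add: sum_negf)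
  define b where "b n = (if n \<in> {..<K} then 0 else cmod (c n) * R^n)" for n
  have "b sums ((\<Sum>n. cmod (c n) * R^n) + (\<Sum>n\<in>{..<K}. 0 - cmod (c n) * R^n))"
    unfolding b_def by (rule sums_If_finite_set'[OF summable_sums[OF sm]]) auto
  then have bs: "b sums ((\<Sum>n. cmod (c n) * R^n) - (\<Sum>n<K. cmod (c n) * R^n))" by (simp add: sum_negf)
  have ab: "norm (a n) \<le> b n" for n
    using z by (auto simp: a_def b_def norm_mult norm_power intro!: mult_left_mono power_mono)
  have sn: "summable (\<lambda>n. norm (a n))"
    by (rule summable_comparison_test[OF _ sums_summable[OF bs]]) (use ab in auto)
  have "cmod (G - (\<Sum>n<K. c n * z^n)) = norm (suminf a)" using as by (simp add: sums_iff)
  also have "\<dots> \<le> (\<Sum>n. norm (a n))" by (rule summable_norm[OF sn])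
  also have "\<dots> \<le> suminf b" by (rule suminf_le[OF ab sn sums_summable[OF bs]])
  also have "\<dots> = (\<Sum>n. cmod (c n) * R^n) - (\<Sum>n<K. cmod (c n) * R^n)" using bs by (simp add: sums_iff)
  finally show ?thesis .
qed

lemma h2_sup:
  assumes holo: "g holomorphic_on ball 0 s" and t: "0 < t" "t < s"
    and bd: "\<And>z. cmod z = t \<Longrightarrow> cmod (g z) \<le> M"
  shows "summable (\<lambda>n. (cmod (taylor_coeff g n))\<^sup>2 * t^(2*n)) \<and>
         (\<Sum>n. (cmod (taylor_coeff g n))\<^sup>2 * t^(2*n)) \<le> M\<^sup>2"
proof -
  define c where "c = taylor_coeff g"
  define t' where "t' = (t + s) / 2"
  have t': "t < t'" "t' < s" using t by (auto simp: t'_def)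
  have "(\<lambda>n. c n * (complex_of_real t')^n) sums g t'"
    unfolding c_def by (rule tc_series[OF holo]) (use t t' in auto)
  from powser_insidea[OF sums_summable[OF this], of "complex_of_real t"] t t'
  have "summable (\<lambda>n. norm (c n * (complex_of_real t)^n))" by simp
  then have smA: "summable (\<lambda>n. cmod (c n) * t^n)" using t by (simp add: norm_mult norm_power)
  define A where "A = (\<Sum>n. cmod (c n) * t^n)"
  define \<epsilon> where "\<epsilon> K = A - (\<Sum>n<K. cmod (c n) * t^n)" for K
  have \<epsilon>0: "\<epsilon> \<longlonglongrightarrow> 0"
  proof -
    have "(\<lambda>K. A - (\<Sum>n<K. cmod (c n) * t^n)) \<longlonglongrightarrow> A - A"
      by (intro tendsto_diff tendsto_const) (simp add: A_def summable_LIMSEQ[OF smA])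
    then show ?thesis by (simp add: \<epsilon>_def[abs_def])
  qed
  define Q where "Q K = (\<Sum>n<K. (cmod (c n))\<^sup>2 * t^(2*n))" for K
  have Pbd: "cmod (taylor_proj K g z) \<le> M + \<epsilon> K" if z: "cmod z = t" for K z
  proof -
    have ser: "(\<lambda>n. c n * z^n) sums g z" unfolding c_def by (rule tc_series[OF holo]) (use z t in auto)
    have "cmod (g z - (\<Sum>n<K. c n * z^n)) \<le> \<epsilon> K"
      using tail_norm[OF ser smA, of K] z by (simp add: \<epsilon>_def A_def)
    moreover have "taylor_proj K g z = g z - (g z - (\<Sum>n<K. c n * z^n))"
      by (simp add: taylor_proj_def c_def)
    ultimately show ?thesis using bd[OF z] norm_triangle_ineq4[of "g z" "g z - (\<Sum>n<K. c n * z^n)"]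
      by simp
  qed
  have QK: "Q K \<le> (M + \<epsilon> K)\<^sup>2" if K: "K > 0" for K
  proof -
    have "real K * Q K = (\<Sum>k<K. (cmod (\<Sum>n<K. c n * (of_real t * cis (2*pi/K)^k)^n))\<^sup>2)"
      unfolding Q_def by (rule disc_parseval[OF K, symmetric])
    also have "\<dots> \<le> (\<Sum>k<K. (M + \<epsilon> K)\<^sup>2)"
    proof (rule sum_mono)
      fix k assume "k \<in> {..<K}"
      have nz: "cmod (of_real t * cis (2*pi/K)^k) = t" using t by (simp add: norm_mult norm_power)
      have "cmod (\<Sum>n<K. c n * (of_real t * cis (2*pi/K)^k)^n) \<le> M + \<epsilon> K"
        using Pbd[OF nz] by (simp add: taylor_proj_def c_def)
      then show "(cmod (\<Sum>n<K. c n * (of_real t * cis (2*pi/K)^k)^n))\<^sup>2 \<le> (M + \<epsilon> K)\<^sup>2"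
        by (intro power_mono) auto
    qed
    also have "\<dots> = real K * (M + \<epsilon> K)\<^sup>2" by simp
    finally show ?thesis using K by simp
  qed
  have Qmono: "Q K0 \<le> Q K" if "K0 \<le> K" for K0 K
    unfolding Q_def by (rule sum_mono2) (use that in auto)
  have QM: "Q K0 \<le> M\<^sup>2" for K0
  proof (rule LIMSEQ_le_const)
    show "(\<lambda>K. (M + \<epsilon> K)\<^sup>2) \<longlonglongrightarrow> M\<^sup>2"
      using tendsto_power[OF tendsto_add[OF tendsto_const \<epsilon>0, of M], of 2] by simp
    show "\<exists>N. \<forall>n\<ge>N. Q K0 \<le> (M + \<epsilon> n)\<^sup>2"
      by (rule exI[of _ "Suc K0"]) (auto intro: order_trans[OF Qmono QK])
  qed
  have sm: "summable (\<lambda>n. (cmod (c n))\<^sup>2 * t^(2*n))"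
  proof (rule bounded_imp_summable[where B="M\<^sup>2"])
    fix n show "(\<Sum>k\<le>n. (cmod (c k))\<^sup>2 * t ^ (2 * k)) \<le> M\<^sup>2"
      using QM[of "Suc n"] by (simp add: Q_def lessThan_Suc_atMost)
  qed (use t in auto)
  have "(\<Sum>n. (cmod (c n))\<^sup>2 * t^(2*n)) \<le> M\<^sup>2"
    by (rule suminf_le_const[OF sm]) (use QM in \<open>simp add: Q_def\<close>)
  with sm show ?thesis by (simp add: c_def)
qed



lemma L_holo:
  assumes ph: "\<forall>l\<in>{1..d}. \<phi> l holomorphic_on ball 0 R"
    and into: "(\<Union>l\<in>{1..d}. \<phi> l ` ball 0 R) \<subseteq> ball 0 r" and rr: "r \<le> \<rho>"
    and h: "h holomorphic_on ball 0 \<rho>"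
  shows "transfer_op d \<phi> h holomorphic_on ball 0 R"
  unfolding transfer_op_def
proof (intro holomorphic_on_sum ballI holomorphic_intros)
  fix l assume l: "l \<in> {1..d}"
  show "\<phi> l holomorphic_on ball 0 R" using ph l by auto
  have "(h \<circ> \<phi> l) holomorphic_on ball 0 R"
  proof (rule holomorphic_on_compose_gen[OF _ h])
    show "\<phi> l holomorphic_on ball 0 R" using ph l by auto
    show "\<phi> l ` ball 0 R \<subseteq> ball 0 \<rho>" using into l rr by fastforce
  qed
  then show "(\<lambda>z. h (\<phi> l z)) holomorphic_on ball 0 R" by (simp add: o_def)
qed auto

lemma L_bound:
  assumes into: "(\<Union>l\<in>{1..d}. \<phi> l ` ball 0 R) \<subseteq> ball 0 r"
    and z: "z \<in> ball 0 R" and hb: "\<And>w. w \<in> ball 0 r \<Longrightarrow> cmod (h w) \<le> B"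
  shows "cmod (transfer_op d \<phi> h z) \<le> B * (\<Sum>l=1..d. cmod (deriv (\<phi> l) z))"
proof -
  have "cmod (transfer_op d \<phi> h z) \<le> (\<Sum>l=1..d. cmod (sgn (deriv (\<phi> l) 0) * deriv (\<phi> l) z * h (\<phi> l z)))"
    unfolding transfer_op_def by (rule norm_sum)
  also have "\<dots> \<le> (\<Sum>l=1..d. B * cmod (deriv (\<phi> l) z))"
  proof (rule sum_mono)
    fix l assume l: "l \<in> {1..d}"
    have w: "\<phi> l z \<in> ball 0 r" using into l z by fastforce
    have s1: "cmod (sgn (deriv (\<phi> l) 0)) \<le> 1" by (simp add: norm_sgn)
    have "cmod (sgn (deriv (\<phi> l) 0) * deriv (\<phi> l) z * h (\<phi> l z))
       = cmod (sgn (deriv (\<phi> l) 0)) * (cmod (deriv (\<phi> l) z) * cmod (h (\<phi> l z)))"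
      by (simp add: norm_mult)
    also have "\<dots> \<le> 1 * (cmod (deriv (\<phi> l) z) * B)"
      by (intro mult_mono s1 mult_left_mono hb w) auto
    finally show "cmod (sgn (deriv (\<phi> l) 0) * deriv (\<phi> l) z * h (\<phi> l z)) \<le> B * cmod (deriv (\<phi> l) z)"
      by (simp add: mult.commute)
  qed
  also have "\<dots> = B * (\<Sum>l=1..d. cmod (deriv (\<phi> l) z))" by (simp add: sum_distrib_left)
  finally show ?thesis .
qed

lemma zero_H2: "(\<lambda>z. 0) \<in> H2 \<rho> \<and> h2norm \<rho> (\<lambda>z. 0) = 0"
proof -
  have "taylor_coeff (\<lambda>z. 0) n = 0" for n
    using tc_proj[of 0 "\<lambda>z. 0" n] by (simp add: taylor_proj_def)
  then show ?thesis by (simp add: H2_def h2norm_def)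
qed

lemma opnorm_le:
  assumes "\<And>f. f \<in> H2 \<rho> \<Longrightarrow> h2norm \<rho> f \<le> 1 \<Longrightarrow> h2norm \<rho> (A f) \<le> c"
  shows "h2_opnorm \<rho> A \<le> c"
  unfolding h2_opnorm_def
proof (rule cSup_least)
  show "{h2norm \<rho> (A f) |f. f \<in> H2 \<rho> \<and> h2norm \<rho> f \<le> 1} \<noteq> {}"
    using zero_H2[of \<rho>] by auto
qed (use assms in auto)

lemma poly_holo: "taylor_proj N h holomorphic_on S"
  unfolding taylor_proj_def by (intro holomorphic_intros)

lemma tail_est:
  assumes holo: "g holomorphic_on ball 0 R" and bd: "\<And>z. z \<in> ball 0 R \<Longrightarrow> cmod (g z) \<le> M"
    and \<rho>: "0 < \<rho>" "\<rho> < R"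
  shows "summable (\<lambda>n. if n < N then 0 else (cmod (taylor_coeff g n))\<^sup>2 * \<rho>^(2*n)) \<and>
         (\<Sum>n. if n < N then 0 else (cmod (taylor_coeff g n))\<^sup>2 * \<rho>^(2*n)) \<le> ((\<rho>/R)^N * M)\<^sup>2"
proof -
  define c where "c = taylor_coeff g"
  define X where "X n = (if n < N then 0 else (cmod (c n))\<^sup>2 * \<rho>^(2*n))" for n
  have main: "summable X \<and> suminf X \<le> (\<rho>/t)^(2*N) * M\<^sup>2" if t: "\<rho> < t" "t < R" for t
  proof -
    have hs: "summable (\<lambda>n. (cmod (c n))\<^sup>2 * t^(2*n)) \<and> (\<Sum>n. (cmod (c n))\<^sup>2 * t^(2*n)) \<le> M\<^sup>2"
      unfolding c_def by (rule h2_sup[OF holo]) (use t \<rho> bd in auto)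
    have le: "X n \<le> (\<rho>/t)^(2*N) * ((cmod (c n))\<^sup>2 * t^(2*n))" for n
    proof (cases "n < N")
      case False
      have "\<rho>^(2*n) = (\<rho>/t)^(2*n) * t^(2*n)" using t \<rho> by (simp add: power_divide)
      also have "\<dots> \<le> (\<rho>/t)^(2*N) * t^(2*n)"
        using False t \<rho> by (intro mult_right_mono power_decreasing) auto
      finally show ?thesis using False unfolding X_def
        by (simp add: mult_left_mono mult.left_commute)
    qed (use t \<rho> in \<open>simp add: X_def\<close>)
    have X0: "X n \<ge> 0" for n using \<rho> by (simp add: X_def)
    have sm2: "summable (\<lambda>n. (\<rho>/t)^(2*N) * ((cmod (c n))\<^sup>2 * t^(2*n)))"
      using hs by (intro summable_mult) auto
    have sX: "summable X" by (rule summable_comparison_test[OF _ sm2]) (use le X0 in auto)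
    have "suminf X \<le> (\<Sum>n. (\<rho>/t)^(2*N) * ((cmod (c n))\<^sup>2 * t^(2*n)))"
      by (rule suminf_le[OF le sX sm2])
    also have "\<dots> = (\<rho>/t)^(2*N) * (\<Sum>n. (cmod (c n))\<^sup>2 * t^(2*n))"
      using hs by (intro suminf_mult) auto
    also have "\<dots> \<le> (\<rho>/t)^(2*N) * M\<^sup>2" using hs t \<rho> by (intro mult_left_mono) auto
    finally show ?thesis using sX by simp
  qed
  define t0 where "t0 = (\<rho> + R) / 2"
  have sX: "summable X" using main[of t0] \<rho> by (auto simp: t0_def)
  have "suminf X \<le> (\<rho>/R)^(2*N) * M\<^sup>2"
  proof (rule tendsto_le[OF trivial_limit_at_left_real])
    show "((\<lambda>t. (\<rho>/t)^(2*N) * M\<^sup>2) \<longlongrightarrow> (\<rho>/R)^(2*N) * M\<^sup>2) (at_left R)"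
      using \<rho> by (intro tendsto_intros) auto
    show "((\<lambda>t. suminf X) \<longlongrightarrow> suminf X) (at_left R)" by simp
    show "eventually (\<lambda>t. suminf X \<le> (\<rho>/t)^(2*N) * M\<^sup>2) (at_left R)"
      using eventually_at_left_real[OF \<rho>(2)] by eventually_elim (use main in auto)
  qed
  also have "(\<rho>/R)^(2*N) * M\<^sup>2 = ((\<rho>/R)^N * M)\<^sup>2"
    by (simp add: power_mult_distrib power_mult[symmetric] mult.commute)
  finally show ?thesis using sX unfolding X_def[abs_def] c_def by simp
qed

theorem proposition4:
  fixes T :: "real \<Rightarrow> real" and d :: nat and a b :: "nat \<Rightarrow> real"
    and \<phi> :: "nat \<Rightarrow> complex \<Rightarrow> complex" and r R \<rho> :: real
  assumes intervals: "\<forall>l\<in>{1..d}. a l < b l"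
    and disjoint_interiors: "\<forall>l\<in>{1..d}. \<forall>m\<in>{1..d}. l \<noteq> m \<longrightarrow> {a l<..<b l} \<inter> {a m<..<b m} = {}"
    and covers: "(\<Union>l\<in>{1..d}. {a l..b l}) = {-1..1}"
    and T_inj: "\<forall>l\<in>{1..d}. inj_on T {a l<..<b l}"
    and T_analytic: "\<forall>l\<in>{1..d}. real_analytic_on T {a l<..<b l}"
    and T_deriv: "\<forall>l\<in>{1..d}. \<forall>x\<in>{a l<..<b l}. \<exists>D. (T has_real_derivative D) (at x) \<and> D \<noteq> 0"
    and T_full: "\<forall>l\<in>{1..d}. closure (T ` {a l<..<b l}) = {-1..1}"
    and phi_inverse: "\<forall>l\<in>{1..d}. \<forall>x\<in>{a l<..<b l}. \<phi> l (complex_of_real (T x)) = complex_of_real x"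
    and phi_range: "\<forall>l\<in>{1..d}. \<forall>y\<in>{-1..1}. \<phi> l (complex_of_real y) \<in> complex_of_real ` {a l..b l}"
    and rR: "1 < r" "r < R"
    and phi_holo: "\<forall>l\<in>{1..d}. \<phi> l holomorphic_on ball 0 R"
    and phi_bounded: "\<forall>l\<in>{1..d}. bounded (\<phi> l ` ball 0 R)"
    and phi_into: "(\<Union>l\<in>{1..d}. \<phi> l ` ball 0 R) \<subseteq> ball 0 r"
    and rho: "r < \<rho>" "\<rho> < R"
  defines "L \<equiv> transfer_op d \<phi>"
    and "S \<equiv> {(\<Sum>l=1..d. cmod (deriv (\<phi> l) z)) | z. z \<in> ball 0 R}"
    and "C \<equiv> \<rho> / sqrt (\<rho>\<^sup>2 - r\<^sup>2) * Sup {(\<Sum>l=1..d. cmod (deriv (\<phi> l) z)) | z. z \<in> ball 0 R}"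
  shows "h2_bounded_op \<rho> L \<and>
    (bdd_above S \<longrightarrow>
      (\<forall>N::nat.
         h2_opnorm \<rho> (\<lambda>f. L f - taylor_proj N (L f)) \<le> C * (\<rho> / R) ^ N \<and>
         h2_opnorm \<rho> (\<lambda>f. L f - L (taylor_proj N f)) \<le> C * (r / \<rho>) ^ N \<and>
         h2_opnorm \<rho> (\<lambda>f. L f - taylor_proj N (L (taylor_proj N f)))
            \<le> C * ((\<rho> / R) ^ N + (r / \<rho>) ^ N)) \<and>
      (\<rho> = sqrt (R * r) \<longrightarrow>
        (\<forall>N::nat. h2_opnorm \<rho> (\<lambda>f. L f - taylor_proj N (L (taylor_proj N f)))
            \<le> 2 * C * (r / R) powr (real N / 2))))"
proof -
  have r0: "0 < r" and rho0: "0 < \<rho>" using rR rho by auto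
  have rr: "r \<le> \<rho>" using rho by simp
  have R0: "0 < R" using rR by simp
  have "r^2 < \<rho>^2" using rho r0 by (intro power_strict_mono) auto
  then have sq: "0 < sqrt (\<rho>\<^sup>2 - r\<^sup>2)" by simp
  define K0 where "K0 = \<rho> / sqrt (\<rho>\<^sup>2 - r\<^sup>2)"
  have K0: "K0 > 0" using sq rho0 by (simp add: K0_def)
  have holoH2: "f holomorphic_on ball 0 \<rho>" if "f \<in> H2 \<rho>" for f
    using that by (simp add: H2_def)
  have nnH2: "h2norm \<rho> f \<ge> 0" if "f \<in> H2 \<rho>" for f
    using that unfolding H2_def h2norm_def by (auto intro!: suminf_nonneg)
  have fbound: "cmod (f w - taylor_proj N f w) \<le> h2norm \<rho> f * (r/\<rho>)^N * K0"
    if "f \<in> H2 \<rho>" "w \<in> ball 0 r" for f w N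
    using tail_bound[OF that(1) r0 rho(1), of w N] that(2) by (simp add: K0_def)
  have f0bound: "cmod (f w) \<le> h2norm \<rho> f * K0" if "f \<in> H2 \<rho>" "w \<in> ball 0 r" for f w
    using fbound[OF that, of 0] by (simp add: taylor_proj_def)
  have Lh: "L h holomorphic_on ball 0 R" if "h holomorphic_on ball 0 \<rho>" for h
    unfolding L_def by (rule L_holo[OF phi_holo phi_into rr that])
  have Lb: "cmod (L h z) \<le> B * (\<Sum>l=1..d. cmod (deriv (\<phi> l) z))"
    if "z \<in> ball 0 R" "\<And>w. w \<in> ball 0 r \<Longrightarrow> cmod (h w) \<le> B" for h z B
    unfolding L_def by (rule L_bound[OF phi_into that])
  have sumcont: "continuous_on (ball 0 R) (\<lambda>z. \<Sum>l=1..d. cmod (deriv (\<phi> l) z))"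
  proof (intro continuous_on_sum continuous_on_norm)
    fix l assume "l \<in> {1..d}"
    then have "deriv (\<phi> l) holomorphic_on ball 0 R" using phi_holo by (auto intro: holomorphic_deriv)
    then show "continuous_on (ball 0 R) (deriv (\<phi> l))" by (rule holomorphic_on_imp_continuous_on)
  qed
  have sc2: "continuous_on (cball 0 \<rho>) (\<lambda>z. \<Sum>l=1..d. cmod (deriv (\<phi> l) z))"
    by (rule continuous_on_subset[OF sumcont]) (use rho in auto)
  have "\<exists>x\<in>cball 0 \<rho>. \<forall>y\<in>cball 0 \<rho>. (\<Sum>l=1..d. cmod (deriv (\<phi> l) y)) \<le> (\<Sum>l=1..d. cmod (deriv (\<phi> l) x))"
    by (rule continuous_attains_sup[OF _ _ sc2]) (use rho0 in auto)
  then obtain D where D: "\<And>z. z \<in> cball 0 \<rho> \<Longrightarrow> (\<Sum>l=1..d. cmod (deriv (\<phi> l) z)) \<le> D" by blast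
  have part1: "L f \<in> H2 \<rho> \<and> h2norm \<rho> (L f) \<le> (K0 * D) * h2norm \<rho> f" if f: "f \<in> H2 \<rho>" for f
  proof -
    define M where "M = h2norm \<rho> f * K0 * D"
    have B0: "h2norm \<rho> f * K0 \<ge> 0" using nnH2[OF f] K0 by simp
    have bd: "cmod (L f z) \<le> M" if z: "cmod z = \<rho>" for z
    proof -
      have zb: "z \<in> ball 0 R" using z rho by simp
      have "cmod (L f z) \<le> (h2norm \<rho> f * K0) * (\<Sum>l=1..d. cmod (deriv (\<phi> l) z))"
        by (rule Lb[OF zb f0bound[OF f]])
      also have "\<dots> \<le> (h2norm \<rho> f * K0) * D" using D[of z] z B0 by (intro mult_left_mono) auto
      finally show ?thesis by (simp add: M_def)
    qed
    have "cmod (L f (of_real \<rho>)) \<le> M" by (rule bd) (use rho0 in simp)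
    then have M0: "M \<ge> 0" using norm_ge_zero[of "L f (of_real \<rho>)"] by linarith
    have hs: "summable (\<lambda>n. (cmod (taylor_coeff (L f) n))\<^sup>2 * \<rho>^(2*n)) \<and>
         (\<Sum>n. (cmod (taylor_coeff (L f) n))\<^sup>2 * \<rho>^(2*n)) \<le> M\<^sup>2"
      by (rule h2_sup[OF Lh[OF holoH2[OF f]] rho0 rho(2) bd])
    have "L f holomorphic_on ball 0 \<rho>"
      by (rule holomorphic_on_subset[OF Lh[OF holoH2[OF f]]]) (use rho in auto)
    then have "L f \<in> H2 \<rho>" using hs by (simp add: H2_def)
    moreover have "h2norm \<rho> (L f) \<le> M"
    proof -
      have "h2norm \<rho> (L f) \<le> sqrt (M\<^sup>2)" unfolding h2norm_def using hs by (intro real_sqrt_le_mono) auto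
      then show ?thesis using M0 by simp
    qed
    ultimately show ?thesis by (simp add: M_def mult_ac)
  qed
  have P1: "h2_bounded_op \<rho> L"
    unfolding h2_bounded_op_def using part1 by blast
  show ?thesis
  proof (intro conjI impI P1)
    assume bS: "bdd_above S"
    define Ms where "Ms = Sup S"
    have hMs: "(\<Sum>l=1..d. cmod (deriv (\<phi> l) z)) \<le> Ms" if "z \<in> ball 0 R" for z
      unfolding Ms_def by (rule cSup_upper[OF _ bS]) (use that in \<open>auto simp: S_def\<close>)
    have "0 \<le> (\<Sum>l=1..d. cmod (deriv (\<phi> l) 0))" by (rule sum_nonneg) simp
    moreover have "(\<Sum>l=1..d. cmod (deriv (\<phi> l) 0)) \<le> Ms" by (rule hMs) (use R0 in simp)
    ultimately have Ms0: "Ms \<ge> 0" by linarith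
    have Cdef: "C = K0 * Ms" by (simp add: C_def K0_def Ms_def S_def)
    have C0: "C \<ge> 0" using Cdef K0 Ms0 by simp
    have key: "h2norm \<rho> (L f - taylor_proj N (L f)) \<le> C * (\<rho> / R) ^ N \<and>
         h2norm \<rho> (L f - L (taylor_proj N f)) \<le> C * (r / \<rho>) ^ N \<and>
         h2norm \<rho> (L f - taylor_proj N (L (taylor_proj N f))) \<le> C * ((\<rho> / R) ^ N + (r / \<rho>) ^ N)"
      if f: "f \<in> H2 \<rho>" and f1: "h2norm \<rho> f \<le> 1" for f N
    proof -
      define g where "g = L f"
      have gh: "g holomorphic_on ball 0 R" unfolding g_def by (rule Lh[OF holoH2[OF f]])
      have gb: "cmod (g z) \<le> C" if z: "z \<in> ball 0 R" for z
      proof -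
        have "cmod (g z) \<le> (h2norm \<rho> f * K0) * (\<Sum>l=1..d. cmod (deriv (\<phi> l) z))"
          unfolding g_def by (rule Lb[OF z f0bound[OF f]])
        also have "\<dots> \<le> (1 * K0) * Ms"
          using hMs[OF z] f1 K0 Ms0 nnH2[OF f]
          by (intro mult_mono mult_right_mono) (auto intro: sum_nonneg)
        finally show ?thesis by (simp add: Cdef)
      qed
      have T1: "summable (\<lambda>n. if n < N then 0 else (cmod (taylor_coeff g n))\<^sup>2 * \<rho>^(2*n)) \<and>
         (\<Sum>n. if n < N then 0 else (cmod (taylor_coeff g n))\<^sup>2 * \<rho>^(2*n)) \<le> ((\<rho>/R)^N * C)\<^sup>2"
        by (rule tail_est[OF gh gb rho0 rho(2)])
      define h where "h = (\<lambda>z. f z - taylor_proj N f z)"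
      have hh: "h holomorphic_on ball 0 \<rho>"
        unfolding h_def by (intro holomorphic_on_diff holoH2[OF f] poly_holo)
      have hb: "cmod (h w) \<le> (r/\<rho>)^N * K0" if "w \<in> ball 0 r" for w
      proof -
        have "cmod (h w) \<le> h2norm \<rho> f * (r/\<rho>)^N * K0" unfolding h_def by (rule fbound[OF f that])
        also have "\<dots> \<le> 1 * (r/\<rho>)^N * K0" using f1 K0 r0 rho0
          by (intro mult_right_mono) auto
        finally show ?thesis by simp
      qed
      have Lhb: "cmod (L h z) \<le> C * (r/\<rho>)^N" if z: "z \<in> ball 0 R" for z
      proof -
        have "cmod (L h z) \<le> ((r/\<rho>)^N * K0) * (\<Sum>l=1..d. cmod (deriv (\<phi> l) z))"
          by (rule Lb[OF z hb])
        also have "\<dots> \<le> ((r/\<rho>)^N * K0) * Ms" using hMs[OF z] K0 r0 rho0 by (intro mult_left_mono) auto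
        finally show ?thesis by (simp add: Cdef mult_ac)
      qed
      have T2: "summable (\<lambda>n. (cmod (taylor_coeff (L h) n))\<^sup>2 * \<rho>^(2*n)) \<and>
         (\<Sum>n. (cmod (taylor_coeff (L h) n))\<^sup>2 * \<rho>^(2*n)) \<le> (C * (r/\<rho>)^N)\<^sup>2"
        by (rule h2_sup[OF Lh[OF hh] rho0 rho(2)]) (use Lhb rho in auto)
      have eqLh: "L f - L (taylor_proj N f) = L h"
        unfolding L_def transfer_op_def h_def fun_diff_def
        by (simp add: sum_subtractf[symmetric] algebra_simps)
      define k where "k = L (taylor_proj N f)"
      have kh: "k holomorphic_on ball 0 R" unfolding k_def by (rule Lh[OF poly_holo])
      have cLh: "taylor_coeff (L h) n = taylor_coeff g n - taylor_coeff k n" for n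
      proof -
        have "L h = (\<lambda>z. g z - k z)" using eqLh by (simp add: g_def k_def fun_diff_def)
        then show ?thesis using tc_diff[OF gh kh R0] by simp
      qed
      have c1: "taylor_coeff (L f - taylor_proj N (L f)) n = (if n < N then 0 else taylor_coeff g n)" for n
        using tc_diff[OF gh poly_holo R0, of N g n]
        by (simp add: fun_diff_def g_def tc_proj)
      have c3: "taylor_coeff (L f - taylor_proj N (L (taylor_proj N f))) n
          = (if n < N then taylor_coeff (L h) n else taylor_coeff g n)" for n
        using tc_diff[OF gh poly_holo R0, of N k n]
        by (simp add: fun_diff_def g_def k_def tc_proj cLh)
      have i: "h2norm \<rho> (L f - taylor_proj N (L f)) \<le> C * (\<rho> / R) ^ N"
      proof -
        have "h2norm \<rho> (L f - taylor_proj N (L f))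
             = sqrt (\<Sum>n. if n < N then 0 else (cmod (taylor_coeff g n))\<^sup>2 * \<rho>^(2*n))"
        proof -
          have "(\<lambda>n. (cmod (taylor_coeff (L f - taylor_proj N (L f)) n))\<^sup>2 * \<rho>^(2*n))
              = (\<lambda>n. if n < N then 0 else (cmod (taylor_coeff g n))\<^sup>2 * \<rho>^(2*n))"
            by (rule ext) (simp add: c1)
          then show ?thesis unfolding h2norm_def by simp
        qed
        also have "\<dots> \<le> sqrt (((\<rho>/R)^N * C)\<^sup>2)" using T1 by (intro real_sqrt_le_mono) auto
        also have "\<dots> = C * (\<rho> / R) ^ N" using C0 rho0 R0 by (simp add: mult.commute)
        finally show ?thesis .
      qed
      have ii: "h2norm \<rho> (L f - L (taylor_proj N f)) \<le> C * (r / \<rho>) ^ N"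
      proof -
        have "h2norm \<rho> (L f - L (taylor_proj N f)) \<le> sqrt ((C * (r/\<rho>)^N)\<^sup>2)"
          unfolding eqLh h2norm_def using T2 by (intro real_sqrt_le_mono) auto
        also have "\<dots> = C * (r / \<rho>) ^ N" using C0 rho0 r0 by simp
        finally show ?thesis .
      qed
      have iii: "h2norm \<rho> (L f - taylor_proj N (L (taylor_proj N f))) \<le> C * ((\<rho> / R) ^ N + (r / \<rho>) ^ N)"
      proof -
        define X1 where "X1 n = (if n < N then 0 else (cmod (taylor_coeff g n))\<^sup>2 * \<rho>^(2*n))" for n
        define X2 where "X2 n = (if n < N then (cmod (taylor_coeff (L h) n))\<^sup>2 * \<rho>^(2*n) else 0)" for n
        have s1: "summable X1" using T1 by (simp add: X1_def[abs_def])
        have s2: "summable X2" unfolding X2_def by simp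
        have X1le: "suminf X1 \<le> ((\<rho>/R)^N * C)\<^sup>2" using T1 by (simp add: X1_def[abs_def])
        have X2le: "suminf X2 \<le> (C * (r/\<rho>)^N)\<^sup>2"
        proof -
          have "suminf X2 \<le> (\<Sum>n. (cmod (taylor_coeff (L h) n))\<^sup>2 * \<rho>^(2*n))"
            by (rule suminf_le[OF _ s2]) (use T2 rho0 in \<open>auto simp: X2_def\<close>)
          then show ?thesis using T2 by linarith
        qed
        have X10: "suminf X1 \<ge> 0" by (rule suminf_nonneg[OF s1]) (use rho0 in \<open>simp add: X1_def\<close>)
        have X20: "suminf X2 \<ge> 0" by (rule suminf_nonneg[OF s2]) (use rho0 in \<open>simp add: X2_def\<close>)
        have "h2norm \<rho> (L f - taylor_proj N (L (taylor_proj N f))) = sqrt (\<Sum>n. X1 n + X2 n)"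
        proof -
          have "(\<lambda>n. (cmod (taylor_coeff (L f - taylor_proj N (L (taylor_proj N f))) n))\<^sup>2 * \<rho>^(2*n))
              = (\<lambda>n. X1 n + X2 n)"
            by (rule ext) (simp add: c3 X1_def X2_def)
          then show ?thesis unfolding h2norm_def by simp
        qed
        also have "\<dots> = sqrt (suminf X1 + suminf X2)" by (simp add: suminf_add[OF s1 s2])
        also have "\<dots> \<le> sqrt (suminf X1) + sqrt (suminf X2)" by (rule sqrt_add_le_add_sqrt[OF X10 X20])
        also have "\<dots> \<le> sqrt (((\<rho>/R)^N * C)\<^sup>2) + sqrt ((C * (r/\<rho>)^N)\<^sup>2)"
          by (intro add_mono real_sqrt_le_mono X1le X2le)
        also have "\<dots> = C * ((\<rho> / R) ^ N + (r / \<rho>) ^ N)"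
          using C0 rho0 r0 R0 by (simp only: real_sqrt_abs) (simp add: algebra_simps)
        finally show ?thesis .
      qed
      show ?thesis using i ii iii by blast
    qed
    have B3: "h2_opnorm \<rho> (\<lambda>f. L f - taylor_proj N (L (taylor_proj N f))) \<le> C * ((\<rho> / R) ^ N + (r / \<rho>) ^ N)" for N
      by (rule opnorm_le) (use key in blast)
    show "\<forall>N::nat.
         h2_opnorm \<rho> (\<lambda>f. L f - taylor_proj N (L f)) \<le> C * (\<rho> / R) ^ N \<and>
         h2_opnorm \<rho> (\<lambda>f. L f - L (taylor_proj N f)) \<le> C * (r / \<rho>) ^ N \<and>
         h2_opnorm \<rho> (\<lambda>f. L f - taylor_proj N (L (taylor_proj N f)))
            \<le> C * ((\<rho> / R) ^ N + (r / \<rho>) ^ N)"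
    proof (intro allI conjI B3)
      fix N :: nat
      show "h2_opnorm \<rho> (\<lambda>f. L f - taylor_proj N (L f)) \<le> C * (\<rho> / R) ^ N"
        by (rule opnorm_le) (use key in blast)
      show "h2_opnorm \<rho> (\<lambda>f. L f - L (taylor_proj N f)) \<le> C * (r / \<rho>) ^ N"
        by (rule opnorm_le) (use key in blast)
    qed
    assume rhoeq: "\<rho> = sqrt (R * r)"
    show "\<forall>N::nat. h2_opnorm \<rho> (\<lambda>f. L f - taylor_proj N (L (taylor_proj N f)))
            \<le> 2 * C * (r / R) powr (real N / 2)"
    proof
      fix N :: nat
      have q0: "r / R > 0" using r0 R0 by simp
      have e1: "\<rho> / R = sqrt (r / R)"
      proof -
        have "sqrt (r/R) = \<rho>/R"
          by (rule real_sqrt_unique) (use rhoeq r0 R0 in \<open>auto simp: power_divide power2_eq_square\<close>)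
        then show ?thesis by simp
      qed
      have e2: "r / \<rho> = sqrt (r / R)"
      proof -
        have "sqrt (r/R) = r/\<rho>"
          by (rule real_sqrt_unique) (use rhoeq r0 R0 in \<open>auto simp: power_divide power2_eq_square\<close>)
        then show ?thesis by simp
      qed
      have e3: "sqrt (r / R) ^ N = (r / R) powr (real N / 2)"
      proof -
        have "sqrt (r / R) ^ N = ((r / R) powr (1/2)) ^ N" using q0 by (simp add: powr_half_sqrt)
        also have "\<dots> = (r / R) powr (real N * (1/2))" by (rule powr_power) (use r0 R0 in simp)
        finally show ?thesis by simp
      qed
      have "h2_opnorm \<rho> (\<lambda>f. L f - taylor_proj N (L (taylor_proj N f))) \<le> C * ((\<rho> / R) ^ N + (r / \<rho>) ^ N)"
        by (rule B3)
      also have "\<dots> = 2 * C * (r / R) powr (real N / 2)" unfolding e1 e2 e3 by simp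
      finally show "h2_opnorm \<rho> (\<lambda>f. L f - taylor_proj N (L (taylor_proj N f))) \<le> 2 * C * (r / R) powr (real N / 2)" .
    qed
  qed
qed

end
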